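(* Let $\Omega\subset\mathbb{R}^2$ be a smooth bounded domain, $(u_p)_{p>1}$ solutions of $-\Delta u=|u|^{p-1}u$ in $\Omega$, $u=0$ on $\partial\Omega$, with $p\int_\Omega|\nabla u_p|^2dx\to\beta\in\mathbb{R}$, and let $k\ge1$ and families $(x_{i,p})$, $i=1,\dots,k$, with $p|u_p(x_{i,p})|^{p-1}\to+\infty$, satisfy (along a sequence $p\to+\infty$) $(\mathcal P_1^k)$, $(\mathcal P_2^k)$, $(\mathcal P_3^k)$. Let $(x_p)\subset\Omega$ with $p|u_p(x_p)|^{p-1}\to+\infty$, $\mu_p:=(p|u_p(x_p)|^{p-1})^{-1/2}$, and let $i\in\{1,\dots,k\}$ be such that (up to a sequence) $R_{k,p}(x_p)=|x_{i,p}-x_p|$. If $\frac{|x_p-x_{i,p}|}{\mu_{i,p}}\to+\infty$, then $\frac{\mu_{i,p}}{\mu_p}\to0$.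
   Context: $\mu_{i,p}:=(p|u_p(x_{i,p})|^{p-1})^{-1/2}$, $R_{k,p}(x):=\min_{i\le k}|x-x_{i,p}|$, $U(x)=\log\left(\frac{1}{1+\frac18|x|^2}\right)^2$. $(\mathcal P_1^k)$: $|x_{i,p}-x_{j,p}|/\mu_{i,p}\to+\infty$ for $i\ne j$. $(\mathcal P_2^k)$: for each $i$, $v_{i,p}(x):=\frac{p}{u_p(x_{i,p})}(u_p(x_{i,p}+\mu_{i,p}x)-u_p(x_{i,p}))\to U$ in $C^1_{loc}(\mathbb{R}^2)$. $(\mathcal P_3^k)$: $\exists C>0$ with $pR_{k,p}(x)^2|u_p(x)|^{p-1}\le C$ for $p$ large and all $x\in\Omega$. *)

theory Defs
  imports "HOL-Analysis.Analysis"
begin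

type_synonym R2 = "real^2"

definition pd :: "2 \<Rightarrow> (R2 \<Rightarrow> real) \<Rightarrow> R2 \<Rightarrow> real" where
  "pd j f x = frechet_derivative f (at x) (axis j 1)"

fun pds :: "2 list \<Rightarrow> (R2 \<Rightarrow> real) \<Rightarrow> R2 \<Rightarrow> real" where
  "pds [] f = f"
| "pds (j # js) f = pd j (pds js f)"

definition grad :: "(R2 \<Rightarrow> real) \<Rightarrow> R2 \<Rightarrow> R2" where
  "grad f x = (\<chi> j. pd j f x)"

definition laplacian :: "(R2 \<Rightarrow> real) \<Rightarrow> R2 \<Rightarrow> real" where
  "laplacian f x = pd 1 (pd 1 f) x + pd 2 (pd 2 f) x"

(* C^infinity on an open set: all iterated partial derivatives exist (hence are continuous) *)
definition smooth_on :: "R2 set \<Rightarrow> (R2 \<Rightarrow> real) \<Rightarrow> bool" where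
  "smooth_on S f \<longleftrightarrow> (\<forall>js. \<forall>x\<in>S. pds js f differentiable (at x))"

definition C2_on :: "R2 set \<Rightarrow> (R2 \<Rightarrow> real) \<Rightarrow> bool" where
  "C2_on S f \<longleftrightarrow> (\<forall>js. length js \<le> 2 \<longrightarrow> continuous_on S (pds js f)) \<and>
                  (\<forall>js. length js \<le> 1 \<longrightarrow> (\<forall>x\<in>S. pds js f differentiable (at x)))"

definition smooth_bounded_domain :: "R2 set \<Rightarrow> bool" where
  "smooth_bounded_domain \<Omega> \<longleftrightarrow> open \<Omega> \<and> connected \<Omega> \<and> bounded \<Omega> \<and> \<Omega> \<noteq> {} \<and>
     (\<exists>\<rho>. smooth_on UNIV \<rho> \<and> \<Omega> = {x. \<rho> x < 0} \<and> (\<forall>x. \<rho> x = 0 \<longrightarrow> grad \<rho> x \<noteq> 0))"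

definition lane_emden_solution :: "R2 set \<Rightarrow> real \<Rightarrow> (R2 \<Rightarrow> real) \<Rightarrow> bool" where
  "lane_emden_solution \<Omega> p u \<longleftrightarrow> C2_on \<Omega> u \<and> continuous_on (closure \<Omega>) u \<and>
     (\<forall>x\<in>frontier \<Omega>. u x = 0) \<and>
     (\<forall>x\<in>\<Omega>. - laplacian u x = \<bar>u x\<bar> powr (p - 1) * u x)"

definition U_lim :: "R2 \<Rightarrow> real" where
  "U_lim x = ln ((1 / (1 + (1/8) * norm x ^ 2)) ^ 2)"

definition mu_par :: "real \<Rightarrow> (R2 \<Rightarrow> real) \<Rightarrow> R2 \<Rightarrow> real" where
  "mu_par p u x = (p * \<bar>u x\<bar> powr (p - 1)) powr (-1/2)"

definition v_resc :: "real \<Rightarrow> (R2 \<Rightarrow> real) \<Rightarrow> R2 \<Rightarrow> R2 \<Rightarrow> real" where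
  "v_resc p u c y = p / u c * (u (c + mu_par p u c *\<^sub>R y) - u c)"

definition R_dist :: "nat \<Rightarrow> (nat \<Rightarrow> R2) \<Rightarrow> R2 \<Rightarrow> real" where
  "R_dist k xs y = Min ((\<lambda>i. dist y (xs i)) ` {1..k})"

definition C1_loc_conv :: "(nat \<Rightarrow> R2 \<Rightarrow> real) \<Rightarrow> (nat \<Rightarrow> R2 set) \<Rightarrow> (R2 \<Rightarrow> real) \<Rightarrow> bool" where
  "C1_loc_conv v D V \<longleftrightarrow> (\<forall>K. compact K \<longrightarrow> (\<forall>\<epsilon>>0. eventually (\<lambda>n. \<forall>y\<in>K. y \<in> D n \<and>
       \<bar>v n y - V y\<bar> < \<epsilon> \<and> norm (grad (v n) y - grad V y) < \<epsilon>) sequentially))"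

end

theory Submission
  imports Defs
begin

theorem proposition2p6:
  fixes \<Omega> :: "R2 set" and p :: "nat \<Rightarrow> real" and u :: "nat \<Rightarrow> R2 \<Rightarrow> real"
    and \<beta> :: real and k :: nat and xs :: "nat \<Rightarrow> nat \<Rightarrow> R2" and x :: "nat \<Rightarrow> R2" and i :: nat
  assumes dom: "smooth_bounded_domain \<Omega>"
    and p_gt1: "\<forall>n. p n > 1"
    and p_inf: "filterlim p at_top sequentially"
    and sol: "\<forall>n. lane_emden_solution \<Omega> (p n) (u n)"
    and energy_int: "\<forall>n. (\<lambda>y. norm (grad (u n) y) ^ 2) integrable_on \<Omega>"
    and energy: "(\<lambda>n. p n * integral \<Omega> (\<lambda>y. norm (grad (u n) y) ^ 2)) \<longlonglongrightarrow> \<beta>"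
    and k: "k \<ge> 1"
    and xs_in: "\<forall>j\<in>{1..k}. \<forall>n. xs j n \<in> \<Omega>"
    and xs_blow: "\<forall>j\<in>{1..k}. filterlim (\<lambda>n. p n * \<bar>u n (xs j n)\<bar> powr (p n - 1)) at_top sequentially"
    and P1: "\<forall>j\<in>{1..k}. \<forall>l\<in>{1..k}. j \<noteq> l \<longrightarrow>
              filterlim (\<lambda>n. dist (xs j n) (xs l n) / mu_par (p n) (u n) (xs j n)) at_top sequentially"
    and P2: "\<forall>j\<in>{1..k}. C1_loc_conv (\<lambda>n. v_resc (p n) (u n) (xs j n))
              (\<lambda>n. {y. xs j n + mu_par (p n) (u n) (xs j n) *\<^sub>R y \<in> \<Omega>}) U_lim"
    and P3: "\<exists>C>0. eventually (\<lambda>n. \<forall>y\<in>\<Omega>.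
              p n * (R_dist k (\<lambda>j. xs j n) y) ^ 2 * \<bar>u n y\<bar> powr (p n - 1) \<le> C) sequentially"
    and x_in: "\<forall>n. x n \<in> \<Omega>"
    and x_blow: "filterlim (\<lambda>n. p n * \<bar>u n (x n)\<bar> powr (p n - 1)) at_top sequentially"
    and i: "i \<in> {1..k}"
    and R_eq: "\<forall>n. R_dist k (\<lambda>j. xs j n) (x n) = dist (xs i n) (x n)"
    and far: "filterlim (\<lambda>n. dist (x n) (xs i n) / mu_par (p n) (u n) (xs i n)) at_top sequentially"
  shows "(\<lambda>n. mu_par (p n) (u n) (xs i n) / mu_par (p n) (u n) (x n)) \<longlonglongrightarrow> 0"
proof -
  define mi where "mi n = mu_par (p n) (u n) (xs i n)" for n
  define mx where "mx n = mu_par (p n) (u n) (x n)" for n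
  define a where "a n = p n * \<bar>u n (x n)\<bar> powr (p n - 1)" for n
  define d where "d n = dist (x n) (xs i n)" for n
  obtain C where C: "C > 0" and evC: "eventually (\<lambda>n. \<forall>y\<in>\<Omega>.
              p n * (R_dist k (\<lambda>j. xs j n) y) ^ 2 * \<bar>u n y\<bar> powr (p n - 1) \<le> C) sequentially"
    using P3 by blast
  have ev_a: "eventually (\<lambda>n. a n > 0) sequentially"
    using x_blow unfolding a_def filterlim_at_top_dense by blast
  have ev_far: "eventually (\<lambda>n. d n / mi n > 0) sequentially"
    using far unfolding d_def mi_def filterlim_at_top_dense by blast
  have lim0: "(\<lambda>n. mi n / d n) \<longlonglongrightarrow> 0"
  proof -
    have "(\<lambda>n. inverse (d n / mi n)) \<longlonglongrightarrow> 0"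
      using far unfolding d_def mi_def by (rule tendsto_inverse_0_at_top)
    then show ?thesis by simp
  qed
  have lim1: "(\<lambda>n. sqrt C * (mi n / d n)) \<longlonglongrightarrow> 0"
    using tendsto_mult[OF tendsto_const lim0, of "sqrt C"] by simp
  have ev_bound: "eventually (\<lambda>n. 0 \<le> mi n / mx n \<and> mi n / mx n \<le> sqrt C * (mi n / d n)) sequentially"
    using ev_a ev_far evC
  proof eventually_elim
    case (elim n)
    have mipos: "mi n \<ge> 0" unfolding mi_def mu_par_def by simp
    have dpos: "d n > 0" and mipos': "mi n > 0" using elim(2) mipos
      by (auto simp: zero_less_divide_iff)
    have mx2: "mx n ^ 2 = 1 / a n"
    proof -
      have "mx n = a n powr (-1/2)" unfolding mx_def a_def mu_par_def by simp
      also have "\<dots> = inverse (sqrt (a n))"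
        using elim(1) by (simp add: powr_minus powr_half_sqrt[symmetric])
      finally have "mx n = inverse (sqrt (a n))" .
      then have "mx n ^ 2 = inverse (sqrt (a n) ^ 2)" by (simp add: power_inverse)
      also have "\<dots> = 1 / a n" using elim(1) by (simp add: divide_inverse)
      finally show ?thesis .
    qed
    have mxpos: "mx n > 0" using elim(1) unfolding mx_def mu_par_def a_def by (auto simp: powr_def split: if_splits)
    have "p n * (d n) ^ 2 * \<bar>u n (x n)\<bar> powr (p n - 1) \<le> C"
      using elim(3) x_in R_eq unfolding d_def by (metis dist_commute)
    then have "d n ^ 2 * a n \<le> C" unfolding a_def by (simp add: algebra_simps)
    moreover have "d n ^ 2 = (d n ^ 2 * a n) * mx n ^ 2" using mx2 elim(1) by simp
    ultimately have "d n ^ 2 \<le> C * mx n ^ 2"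
      by (metis mult_right_mono zero_le_power2)
    then have "sqrt (d n ^ 2) \<le> sqrt (C * mx n ^ 2)" by (rule real_sqrt_le_mono)
    then have dle: "d n \<le> sqrt C * mx n" using dpos mxpos C
      by (simp add: real_sqrt_mult)
    have "mi n / mx n \<le> sqrt C * (mi n / d n)"
    proof -
      have "mi n * d n \<le> mi n * (sqrt C * mx n)" using dle mipos by (rule mult_left_mono)
      then show ?thesis using dpos mxpos by (simp add: field_simps)
    qed
    then show ?case using mipos mxpos by simp
  qed
  have "(\<lambda>n. mi n / mx n) \<longlonglongrightarrow> 0"
    by (rule real_tendsto_sandwich[OF _ _ tendsto_const lim1])
       (use ev_bound in \<open>auto elim: eventually_mono\<close>)
  then show ?thesis unfolding mi_def mx_def .
qed

end
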